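(* Let $a\ge0$, $r>0$, $\beta\in\mathbb{R}$, $\theta\in(0,\frac\pi2)$ and $\lambda\in\overline{\Sigma_{\theta,r}}$. If either $\theta\in(\theta_0,\frac\pi2)$ with $\tan\theta_0\ge\frac{|\beta|}{\sqrt2}$, or ${\rm Re}\,\lambda>-\frac a2$, then $z_j(\lambda)\notin\mathbb{R}_-$ for $j=1,2$.
   Context: $\mathbb{R}_-=(-\infty,0)$. $\Sigma_{\theta,r}=\{z\in\mathbb{C}\setminus\{0\}:|\arg z|<\pi-\theta,|z|>r\}$, $\overline{\Sigma_{\theta,r}}$ its closure. $z_{1,2}(\lambda)$ are the two roots $z$ of $(\lambda-z)(\lambda+a-z)+\frac{\beta^2}{2}(z^2-az)=0$, i.e. $z_{1,2}=\frac{2\lambda+a(1+\beta^2/2)\pm\sqrt{a^2(1+\beta^2/2)^2-2\lambda^2\beta^2}}{2(1+\beta^2/2)}$. *)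

theory Defs
  imports "HOL-Analysis.Analysis"
begin

definition sector :: "real \<Rightarrow> real \<Rightarrow> complex set" where
  "sector \<theta> r = {z. z \<noteq> 0 \<and> \<bar>Arg z\<bar> < pi - \<theta> \<and> cmod z > r}"

definition neg_reals :: "complex set" where
  "neg_reals = {z. z \<in> \<real> \<and> Re z < 0}"

definition zroot1 :: "real \<Rightarrow> real \<Rightarrow> complex \<Rightarrow> complex" where
  "zroot1 a \<beta> l =
     (2 * l + of_real (a * (1 + \<beta>^2/2))
       + csqrt (of_real ((a * (1 + \<beta>^2/2))^2) - 2 * l^2 * of_real (\<beta>^2)))
     / of_real (2 * (1 + \<beta>^2/2))"

definition zroot2 :: "real \<Rightarrow> real \<Rightarrow> complex \<Rightarrow> complex" where
  "zroot2 a \<beta> l =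
     (2 * l + of_real (a * (1 + \<beta>^2/2))
       - csqrt (of_real ((a * (1 + \<beta>^2/2))^2) - 2 * l^2 * of_real (\<beta>^2)))
     / of_real (2 * (1 + \<beta>^2/2))"

end

theory Submission
  imports Defs
begin

lemma closure_sector_sub:
  assumes "0 < \<theta>" "\<theta> < pi/2"
  shows "closure (sector \<theta> r) \<subseteq> {z. Re z \<ge> - cmod z * cos \<theta> \<and> cmod z \<ge> r}"
proof (rule closure_minimal)
  show "sector \<theta> r \<subseteq> {z. Re z \<ge> - cmod z * cos \<theta> \<and> cmod z \<ge> r}"
  proof
    fix z assume "z \<in> sector \<theta> r"
    hence z: "z \<noteq> 0" "\<bar>Arg z\<bar> < pi - \<theta>" "cmod z > r" by (auto simp: sector_def)
    have "cos (pi - \<theta>) \<le> cos \<bar>Arg z\<bar>"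
      using z assms by (intro cos_monotone_0_pi_le) auto
    also have "cos \<bar>Arg z\<bar> = cos (Arg z)" by (simp add: abs_if)
    also have "cos (Arg z) = Re z / cmod z" using z by (simp add: cos_Arg)
    finally have "- cos \<theta> \<le> Re z / cmod z" by simp
    hence "- cos \<theta> * cmod z \<le> Re z" using z by (simp add: divide_simps)
    thus "z \<in> {z. Re z \<ge> - cmod z * cos \<theta> \<and> cmod z \<ge> r}" using z by (auto simp: algebra_simps)
  qed
  show "closed {z. Re z \<ge> - cmod z * cos \<theta> \<and> cmod z \<ge> r}"
    by (intro closed_Collect_conj closed_Collect_le continuous_intros)
qed

lemma root_eq:
  fixes c :: real and p q s :: complex
  assumes "c > 0" "s^2 = p^2 - 4 * of_real c * q" "z = (p + s) / of_real (2*c) \<or> z = (p - s) / of_real (2*c)"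
  shows "of_real c * z^2 - p * z + q = 0"
proof -
  have c0: "(of_real c :: complex) \<noteq> 0" using assms by simp
  obtain s' where s': "s' = s \<or> s' = - s" and z: "z = (p + s') / of_real (2*c)"
    using assms(3) by (metis diff_conv_add_uminus)
  have s2: "s'^2 = p^2 - 4 * of_real c * q" using s' assms(2) by auto
  have "s' = 2 * of_real c * z - p" using z c0 by (simp add: field_simps)
  with s2 have "(2 * of_real c * z - p)^2 = p^2 - 4 * of_real c * q" by simp
  hence "4 * of_real c * (of_real c * z^2 - p * z + q) = 0"
    by (simp add: power2_eq_square algebra_simps)
  thus ?thesis using c0 by simp
qed

lemma key:
  fixes a b t x y \<theta> :: real
  assumes a: "a \<ge> 0" and b: "b \<ge> 0" and t: "t > 0" and th: "0 < \<theta>" "\<theta> < pi/2"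
    and sec: "x \<ge> - cmod (Complex x y) * cos \<theta>"
    and disj: "(\<exists>\<theta>0. 0 \<le> \<theta>0 \<and> \<theta>0 < \<theta> \<and> tan \<theta>0 \<ge> sqrt b) \<or> x > - a / 2"
    and re: "(1+b)*t^2 + (2*x + a*(1+b))*t + x^2 - y^2 + a*x = 0"
    and im: "2*y*t + 2*x*y + a*y = 0"
  shows False
proof -
  have cpos: "cos \<theta> > 0" using th by (intro cos_gt_zero_pi) auto
  have clt: "cos \<theta> < 1" using th cos_monotone_0_pi[of 0 \<theta>] by auto
  have spos: "sin \<theta> > 0" using th by (intro sin_gt_zero) auto
  have "y * (2*t + 2*x + a) = 0" using im by (simp add: algebra_simps)
  hence "y = 0 \<or> x = -t - a/2" by auto
  thus False
  proof
    assume y: "y = 0"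
    have x: "x < 0"
    proof (rule ccontr)
      assume "\<not> x < 0"
      hence "(1+b)*t^2 + (2*x + a*(1+b))*t + x^2 - y^2 + a*x > 0"
      proof -
        have "(1+b)*t^2 > 0" using b t by simp
        moreover have "(2*x + a*(1+b))*t \<ge> 0" using \<open>\<not> x < 0\<close> a b t by simp
        moreover have "a*x \<ge> 0" using \<open>\<not> x < 0\<close> a by simp
        ultimately show ?thesis using y by (simp add: add_pos_nonneg)
      qed
      thus False using re by simp
    qed
    have "cmod (Complex x y) = - x" using x y by (simp add: cmod_def)
    hence "x * (1 - cos \<theta>) \<ge> 0" using sec by (simp add: algebra_simps)
    thus False using x clt by (simp add: mult_less_0_iff mult_le_0_iff zero_le_mult_iff)
  next
    assume x: "x = -t - a/2"
    have xneg: "x < 0" using x t a by simp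
    hence "\<not> x > - a/2" using x t by simp
    then obtain \<theta>0 where th0: "0 \<le> \<theta>0" "\<theta>0 < \<theta>" "tan \<theta>0 \<ge> sqrt b" using disj by auto
    have "tan \<theta>0 < tan \<theta>" using th0 th by (intro tan_monotone) auto
    hence "sqrt b < sin \<theta> / cos \<theta>" using th0 by (simp add: tan_def)
    hence "sqrt b * cos \<theta> < sin \<theta>" using cpos by (simp add: field_simps)
    moreover have "0 \<le> sqrt b * cos \<theta>" using cpos b by simp
    ultimately have "(sqrt b * cos \<theta>)^2 < (sin \<theta>)^2" by (intro power_strict_mono) auto
    hence ssb: "b * (cos \<theta>)^2 < (sin \<theta>)^2" using b by (simp add: power_mult_distrib)
    have yy: "y^2 = b*(t^2 + a*t) - a^2/4" using re x by (simp add: power2_eq_square algebra_simps)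
    have bx: "b * x^2 = b*(t^2 + a*t) + b*a^2/4" unfolding x by (simp add: power2_eq_square algebra_simps)
    have ybx: "y^2 \<le> b * x^2" unfolding bx yy using a b
      by (smt (verit) divide_nonneg_nonneg mult_nonneg_nonneg zero_le_power2)
    have "- x \<le> cmod (Complex x y) * cos \<theta>" using sec by simp
    hence "(- x)^2 \<le> (cmod (Complex x y) * cos \<theta>)^2" using xneg by (intro power_mono) auto
    hence "x^2 \<le> (x^2 + y^2) * (cos \<theta>)^2" by (simp add: cmod_def power_mult_distrib)
    hence "x^2 * (1 - (cos \<theta>)^2) \<le> y^2 * (cos \<theta>)^2" by (simp add: algebra_simps)
    hence "x^2 * (sin \<theta>)^2 \<le> y^2 * (cos \<theta>)^2" by (simp add: sin_squared_eq)
    also have "\<dots> \<le> b * x^2 * (cos \<theta>)^2" using ybx by (intro mult_right_mono) auto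
    finally have "x^2 * (sin \<theta>)^2 \<le> x^2 * (b * (cos \<theta>)^2)" by (simp add: algebra_simps)
    moreover have "x^2 > 0" using xneg by simp
    ultimately have "(sin \<theta>)^2 \<le> b * (cos \<theta>)^2" by simp
    thus False using ssb by simp
  qed
qed

lemma not_neg:
  fixes a b \<theta> :: real and l z :: complex
  assumes a: "a \<ge> 0" and b: "b \<ge> 0" and th: "0 < \<theta>" "\<theta> < pi/2"
    and sec: "Re l \<ge> - cmod l * cos \<theta>"
    and disj: "(\<exists>\<theta>0. 0 \<le> \<theta>0 \<and> \<theta>0 < \<theta> \<and> tan \<theta>0 \<ge> sqrt b) \<or> Re l > - a / 2"
    and eq: "of_real (1+b) * z^2 - (2*l + of_real (a*(1+b))) * z + l * (l + of_real a) = 0"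
  shows "z \<notin> neg_reals"
proof
  assume "z \<in> neg_reals"
  then obtain u where u: "z = of_real u" "u < 0" by (auto simp: neg_reals_def elim!: Reals_cases)
  define t where "t = - u"
  have t: "t > 0" "z = of_real (-t)" using u by (auto simp: t_def)
  obtain x y where l: "l = Complex x y" by (metis complex.collapse)
  have "Re (of_real (1+b) * z^2 - (2*l + of_real (a*(1+b))) * z + l * (l + of_real a)) = 0"
    using eq by simp
  hence re: "(1+b)*t^2 + (2*x + a*(1+b))*t + x^2 - y^2 + a*x = 0"
    unfolding t l by (simp add: power2_eq_square algebra_simps)
  have "Im (of_real (1+b) * z^2 - (2*l + of_real (a*(1+b))) * z + l * (l + of_real a)) = 0"
    using eq by simp
  hence im: "2*y*t + 2*x*y + a*y = 0"
    unfolding t l by (simp add: power2_eq_square algebra_simps)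
  show False
    using key[OF a b t(1) th _ _ re im] sec disj unfolding l by simp
qed

theorem lemma3p12:
  fixes a r \<beta> \<theta> :: real and l :: complex
  assumes "a \<ge> 0" and "r > 0" and "0 < \<theta>" and "\<theta> < pi/2"
    and "l \<in> closure (sector \<theta> r)"
    and "(\<exists>\<theta>0. 0 \<le> \<theta>0 \<and> \<theta>0 < \<theta> \<and> tan \<theta>0 \<ge> \<bar>\<beta>\<bar> / sqrt 2) \<or> Re l > - a / 2"
  shows "zroot1 a \<beta> l \<notin> neg_reals \<and> zroot2 a \<beta> l \<notin> neg_reals"
proof -
  define b where "b = \<beta>^2/2"
  have b: "b \<ge> 0" by (simp add: b_def)
  have sb: "sqrt b = \<bar>\<beta>\<bar> / sqrt 2" by (simp add: b_def real_sqrt_divide)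
  have sec: "Re l \<ge> - cmod l * cos \<theta>"
    using closure_sector_sub[OF assms(3,4)] assms(5) by blast
  define p where "p = 2 * l + of_real (a * (1 + b))"
  define q where "q = l * (l + of_real a)"
  define s where "s = csqrt (of_real ((a * (1 + \<beta>^2/2))^2) - 2 * l^2 * of_real (\<beta>^2))"
  have "s^2 = of_real ((a * (1 + \<beta>^2/2))^2) - 2 * l^2 * of_real (\<beta>^2)"
    unfolding s_def by simp
  also have "\<dots> = p^2 - 4 * of_real (1+b) * q"
    unfolding p_def q_def b_def by (simp add: power2_eq_square algebra_simps)
  finally have s2: "s^2 = p^2 - 4 * of_real (1+b) * q" .
  have c: "1 + b > 0" using b by simp
  have z1: "zroot1 a \<beta> l = (p + s) / of_real (2*(1+b))"
    unfolding zroot1_def p_def s_def b_def by simp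
  have z2: "zroot2 a \<beta> l = (p - s) / of_real (2*(1+b))"
    unfolding zroot2_def p_def s_def b_def by simp
  have e1: "of_real (1+b) * (zroot1 a \<beta> l)^2 - p * zroot1 a \<beta> l + q = 0"
    using root_eq[OF c s2] z1 by blast
  have e2: "of_real (1+b) * (zroot2 a \<beta> l)^2 - p * zroot2 a \<beta> l + q = 0"
    using root_eq[OF c s2] z2 by blast
  have disj: "(\<exists>\<theta>0. 0 \<le> \<theta>0 \<and> \<theta>0 < \<theta> \<and> tan \<theta>0 \<ge> sqrt b) \<or> Re l > - a / 2"
    using assms(6) unfolding sb .
  show ?thesis
    using not_neg[OF assms(1) b assms(3,4) sec disj] e1 e2 unfolding p_def q_def by blast
qed

end
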